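(* Let $\mathbb X=\langle X,\rho\rangle$ be a countable structure with $\rho$ an equivalence relation whose classes are countably infinitely many singletons together with exactly one class of size $i$ for each $i\ge2$; and let $\mathbb Y=\langle Y,\sigma\rangle$ be a countable structure with $\sigma$ an equivalence relation whose classes are countably infinitely many singletons together with exactly one further class, which is countably infinite. Then $\mathbb X\equiv_{\mathcal P}\mathbb Y$, $\mathbb X\not\equiv_{\mathcal P_{\infty\omega}}\mathbb Y$, and $\mathbb X\not\equiv\mathbb Y$.
   Context: The language has one binary relation symbol $R$. $\equiv$ is first order elementary equivalence. $\mathcal P_0$ consists of all atomic formulas ($v_\alpha=v_\beta$, $R(v_\alpha,v_\beta)$) and all $\neg\,v_\alpha=v_\beta$; $\mathcal P$ is the closure of $\mathcal P_0$ under finite conjunctions, finite disjunctions, $\forall v$ and $\exists v$ (no negation), and $\mathcal P_{\infty\omega}$ is the closure of $\mathcal P_0$ under $\forall v$, $\exists v$ and conjunctions and disjunctions of arbitrary sets of formulas (no negation). For a class $\mathcal F$, $\mathbb X\equiv_{\mathcal F}\mathbb Y$ means $\mathbb X,\mathbb Y$ satisfy the same sentences of $\mathcal F$. *)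

theory Defs
  imports Main "HOL-Library.Countable_Set"
begin

datatype fm =
    FEq nat nat
  | FRel nat nat
  | FNeg fm
  | FConj fm fm
  | FDisj fm fm
  | FAll nat fm
  | FEx nat fm

fun fv :: "fm \<Rightarrow> nat set" where
  "fv (FEq a b) = {a, b}"
| "fv (FRel a b) = {a, b}"
| "fv (FNeg p) = fv p"
| "fv (FConj p q) = fv p \<union> fv q"
| "fv (FDisj p q) = fv p \<union> fv q"
| "fv (FAll v p) = fv p - {v}"
| "fv (FEx v p) = fv p - {v}"

fun sat :: "'a set \<Rightarrow> ('a \<times> 'a) set \<Rightarrow> fm \<Rightarrow> (nat \<Rightarrow> 'a) \<Rightarrow> bool" where
  "sat A R (FEq a b) e = (e a = e b)"
| "sat A R (FRel a b) e = ((e a, e b) \<in> R)"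
| "sat A R (FNeg p) e = (\<not> sat A R p e)"
| "sat A R (FConj p q) e = (sat A R p e \<and> sat A R q e)"
| "sat A R (FDisj p q) e = (sat A R p e \<or> sat A R q e)"
| "sat A R (FAll v p) e = (\<forall>x\<in>A. sat A R p (e(v := x)))"
| "sat A R (FEx v p) e = (\<exists>x\<in>A. sat A R p (e(v := x)))"

fun positive :: "fm \<Rightarrow> bool" where
  "positive (FEq a b) = True"
| "positive (FRel a b) = True"
| "positive (FNeg p) = (\<exists>a b. p = FEq a b)"
| "positive (FConj p q) = (positive p \<and> positive q)"
| "positive (FDisj p q) = (positive p \<and> positive q)"
| "positive (FAll v p) = positive p"
| "positive (FEx v p) = positive p"

definition holds :: "'a set \<Rightarrow> ('a \<times> 'a) set \<Rightarrow> fm \<Rightarrow> bool" where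
  "holds A R p \<longleftrightarrow> (\<forall>e. (\<forall>n. e n \<in> A) \<longrightarrow> sat A R p e)"

definition elem_equiv ::
  "'a set \<Rightarrow> ('a \<times> 'a) set \<Rightarrow> 'b set \<Rightarrow> ('b \<times> 'b) set \<Rightarrow> bool" where
  "elem_equiv A R B S \<longleftrightarrow> (\<forall>p. fv p = {} \<longrightarrow> (holds A R p \<longleftrightarrow> holds B S p))"

definition pos_equiv ::
  "'a set \<Rightarrow> ('a \<times> 'a) set \<Rightarrow> 'b set \<Rightarrow> ('b \<times> 'b) set \<Rightarrow> bool" where
  "pos_equiv A R B S \<longleftrightarrow>
     (\<forall>p. fv p = {} \<and> positive p \<longrightarrow> (holds A R p \<longleftrightarrow> holds B S p))"

text \<open>Infinitary positive formulas \<P>_{\<infinity>\<omega>}: conjunctions and disjunctions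
  over arbitrary families of formulas, indexed by subsets of nat
  (sufficient for countable structures).\<close>
datatype pfm =
    PEq nat nat
  | PRel nat nat
  | PNeq nat nat
  | PConj "nat set" "nat \<Rightarrow> pfm"
  | PDisj "nat set" "nat \<Rightarrow> pfm"
  | PAll nat pfm
  | PEx nat pfm

primrec pfv :: "pfm \<Rightarrow> nat set" where
  "pfv (PEq a b) = {a, b}"
| "pfv (PRel a b) = {a, b}"
| "pfv (PNeq a b) = {a, b}"
| "pfv (PConj I f) = (\<Union>i\<in>I. pfv (f i))"
| "pfv (PDisj I f) = (\<Union>i\<in>I. pfv (f i))"
| "pfv (PAll v p) = pfv p - {v}"
| "pfv (PEx v p) = pfv p - {v}"

primrec psat :: "'a set \<Rightarrow> ('a \<times> 'a) set \<Rightarrow> pfm \<Rightarrow> (nat \<Rightarrow> 'a) \<Rightarrow> bool" where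
  "psat A R (PEq a b) e = (e a = e b)"
| "psat A R (PRel a b) e = ((e a, e b) \<in> R)"
| "psat A R (PNeq a b) e = (e a \<noteq> e b)"
| "psat A R (PConj I f) e = (\<forall>i\<in>I. psat A R (f i) e)"
| "psat A R (PDisj I f) e = (\<exists>i\<in>I. psat A R (f i) e)"
| "psat A R (PAll v p) e = (\<forall>x\<in>A. psat A R p (e(v := x)))"
| "psat A R (PEx v p) e = (\<exists>x\<in>A. psat A R p (e(v := x)))"

definition pholds :: "'a set \<Rightarrow> ('a \<times> 'a) set \<Rightarrow> pfm \<Rightarrow> bool" where
  "pholds A R p \<longleftrightarrow> (\<forall>e. (\<forall>n. e n \<in> A) \<longrightarrow> psat A R p e)"

definition inf_pos_equiv ::
  "'a set \<Rightarrow> ('a \<times> 'a) set \<Rightarrow> 'b set \<Rightarrow> ('b \<times> 'b) set \<Rightarrow> bool" where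
  "inf_pos_equiv A R B S \<longleftrightarrow>
     (\<forall>p. pfv p = {} \<longrightarrow> (pholds A R p \<longleftrightarrow> pholds B S p))"

end

theory Submission imports Defs begin

fun qd :: "fm \<Rightarrow> nat" where
  "qd (FEq a b) = 0"
| "qd (FRel a b) = 0"
| "qd (FNeg p) = qd p"
| "qd (FConj p q) = max (qd p) (qd q)"
| "qd (FDisj p q) = max (qd p) (qd q)"
| "qd (FAll v p) = Suc (qd p)"
| "qd (FEx v p) = Suc (qd p)"

lemma hom_sat:
  "positive \<phi> \<Longrightarrow> bij_betw h A B \<Longrightarrow> (\<forall>a b. (a,b) \<in> R \<longrightarrow> (h a, h b) \<in> S)
   \<Longrightarrow> (\<forall>n. e n \<in> A) \<Longrightarrow> sat A R \<phi> e \<Longrightarrow> sat B S \<phi> (h \<circ> e)"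
proof (induction \<phi> arbitrary: e)
  case (FNeg p)
  then obtain a b where p: "p = FEq a b" by auto
  have "inj_on h A" using FNeg.prems(2) by (simp add: bij_betw_def)
  then show ?case using FNeg.prems p by (auto dest: inj_onD)
next
  case (FEx v p)
  obtain x where x: "x \<in> A" "sat A R p (e(v:=x))" using FEx.prems(5) by auto
  have "\<forall>n. (e(v:=x)) n \<in> A" using FEx.prems(4) x by auto
  moreover have "positive p" using FEx.prems(1) by simp
  ultimately have "sat B S p (h \<circ> e(v:=x))" using FEx.IH[OF _ FEx.prems(2) FEx.prems(3)] x by blast
  moreover have "h x \<in> B" using FEx.prems(2) x by (auto simp: bij_betw_def)
  ultimately have "\<exists>y\<in>B. sat B S p ((h \<circ> e)(v := y))" by (auto simp: fun_upd_comp)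
  then show ?case by (simp only: sat.simps)
next
  case (FAll v p)
  show ?case
  proof (simp only: sat.simps, intro ballI)
    fix y assume y: "y \<in> B"
    obtain x where x: "x \<in> A" "y = h x" using FAll.prems(2) y by (auto simp: bij_betw_def)
    have "\<forall>n. (e(v:=x)) n \<in> A" using FAll.prems(4) x by auto
    moreover have "sat A R p (e(v:=x))" using FAll.prems(5) x by auto
    moreover have "positive p" using FAll.prems(1) by simp
    ultimately have "sat B S p (h \<circ> e(v:=x))" using FAll.IH[OF _ FAll.prems(2) FAll.prems(3)] by blast
    then show "sat B S p ((h \<circ> e)(v := y))" using x by (simp add: fun_upd_comp)
  qed
qed auto

lemma hom_holds:
  fixes A :: "'a set" and B :: "'b set"
  assumes "positive \<phi>" "bij_betw h A B" "\<forall>a b. (a,b) \<in> R \<longrightarrow> (h a, h b) \<in> S" "holds A R \<phi>"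
  shows "holds B S \<phi>"
  unfolding holds_def
proof (intro allI impI)
  fix e' :: "nat \<Rightarrow> 'b" assume e': "\<forall>n. e' n \<in> B"
  let ?e = "inv_into A h \<circ> e'"
  have eA: "\<forall>n. ?e n \<in> A" using e' assms(2) by (simp add: bij_betw_def inv_into_into)
  then have "sat A R \<phi> ?e" using assms(4) unfolding holds_def by blast
  then have "sat B S \<phi> (h \<circ> ?e)" using hom_sat assms eA by blast
  moreover have "h \<circ> ?e = e'" using e' bij_betw_inv_into_right[OF assms(2)] by (auto simp: fun_eq_iff)
  ultimately show "sat B S \<phi> e'" by simp
qed

primrec exs :: "nat \<Rightarrow> pfm \<Rightarrow> pfm" where
  "exs 0 p = p"
| "exs (Suc k) p = PEx (Suc k) (exs k p)"

lemma exs_sat: "psat A R (exs k p) e \<longleftrightarrow>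
   (\<exists>f. (\<forall>i\<in>{1..k}. f i \<in> A) \<and> psat A R p (\<lambda>v. if v \<in> {1..k} then f v else e v))"
proof (induction k arbitrary: e)
  case 0 then show ?case by simp
next
  case (Suc k)
  have eq1: "(\<lambda>v. if v \<in> {1..k} then f v else (e(Suc k := x)) v) =
             (\<lambda>v. if v \<in> {1..Suc k} then (f(Suc k := x)) v else e v)" for f x
    by (auto simp: fun_eq_iff)
  have eq2: "(\<lambda>v. if v \<in> {1..k} then g v else (e(Suc k := g (Suc k))) v) =
             (\<lambda>v. if v \<in> {1..Suc k} then g v else e v)" for g
    by (auto simp: fun_eq_iff le_Suc_eq)
  show ?case
  proof
    assume "psat A R (exs (Suc k) p) e"
    then obtain x where x: "x \<in> A" "psat A R (exs k p) (e(Suc k := x))" by auto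
    then obtain f where f: "\<forall>i\<in>{1..k}. f i \<in> A"
      "psat A R p (\<lambda>v. if v \<in> {1..k} then f v else (e(Suc k := x)) v)"
      using Suc.IH[of "e(Suc k := x)"] by blast
    have 1: "psat A R p (\<lambda>v. if v \<in> {1..Suc k} then (f(Suc k := x)) v else e v)"
      using f(2) unfolding eq1 .
    have 2: "\<forall>i\<in>{1..Suc k}. (f(Suc k := x)) i \<in> A"
    proof
      fix i assume "i \<in> {1..Suc k}"
      then have "i = Suc k \<or> i \<in> {1..k}" by auto
      then show "(f(Suc k := x)) i \<in> A" using f(1) x(1) by auto
    qed
    from 1 2 show "\<exists>f. (\<forall>i\<in>{1..Suc k}. f i \<in> A) \<and> psat A R p (\<lambda>v. if v \<in> {1..Suc k} then f v else e v)"
      by blast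
  next
    assume "\<exists>g. (\<forall>i\<in>{1..Suc k}. g i \<in> A) \<and> psat A R p (\<lambda>v. if v \<in> {1..Suc k} then g v else e v)"
    then obtain g where g: "\<forall>i\<in>{1..Suc k}. g i \<in> A" "psat A R p (\<lambda>v. if v \<in> {1..Suc k} then g v else e v)"
      by blast
    have g1: "\<forall>i\<in>{1..k}. g i \<in> A" using g(1) by auto
    have g2: "psat A R p (\<lambda>v. if v \<in> {1..k} then g v else (e(Suc k := g (Suc k))) v)"
      using g(2) unfolding eq2 .
    have "psat A R (exs k p) (e(Suc k := g (Suc k)))"
      using Suc.IH[of "e(Suc k := g (Suc k))"] g1 g2 by blast
    moreover have "g (Suc k) \<in> A" using g(1) by auto
    ultimately show "psat A R (exs (Suc k) p) e" by auto
  qed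
qed

lemma pfv_exs: "pfv (exs k p) = pfv p - {1..k}"
proof (induction k)
  case 0 then show ?case by simp
next
  case (Suc k)
  have "{1..Suc k} = insert (Suc k) {1..k}" by auto
  then show ?case using Suc by auto
qed

definition body :: "nat \<Rightarrow> pfm" where
  "body n = PConj {1..n} (\<lambda>i. PConj {1..n} (\<lambda>j. if i = j then PRel 0 i else PNeq i j))"

definition Phi :: pfm where "Phi = PEx 0 (PConj UNIV (\<lambda>n. exs n (body n)))"

lemma pfv_Phi: "pfv Phi = {}"
proof -
  have "pfv (body n) \<subseteq> insert 0 {1..n}" for n unfolding body_def by (auto split: if_splits)
  then show ?thesis unfolding Phi_def by (auto simp: pfv_exs)
qed

lemma Phi_sat: "psat A R Phi e \<longleftrightarrow> (\<exists>x\<in>A. \<forall>n::nat. \<exists>f. (\<forall>i\<in>{1..n}. f i \<in> A) \<and>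
   (\<forall>i\<in>{1..n}. (x, f i) \<in> R) \<and> (\<forall>i\<in>{1..n}. \<forall>j\<in>{1..n}. i \<noteq> j \<longrightarrow> f i \<noteq> f j))"
proof -
  have bodyeq: "psat A R (body n) (\<lambda>v. if v \<in> {1..n} then f v else (e(0:=x)) v) \<longleftrightarrow>
     (\<forall>i\<in>{1..n}. (x, f i) \<in> R) \<and> (\<forall>i\<in>{1..n}. \<forall>j\<in>{1..n}. i \<noteq> j \<longrightarrow> f i \<noteq> f j)" for n f x
    unfolding body_def by auto
  show ?thesis unfolding Phi_def by (simp only: psat.simps exs_sat bodyeq) simp
qed

definition Psi :: fm where
  "Psi = FEx 0 (FAll 2 (FAll 3 (FDisj (FNeg (FRel 2 3)) (FDisj (FEq 2 3) (FRel 0 2)))))"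

lemma fv_Psi: "fv Psi = {}" unfolding Psi_def by auto

lemma Psi_sat: "sat A R Psi e \<longleftrightarrow> (\<exists>x\<in>A. \<forall>z\<in>A. \<forall>w\<in>A. (z,w) \<in> R \<longrightarrow> z = w \<or> (x,z) \<in> R)"
  unfolding Psi_def by auto

locale game =
  fixes X :: "'a set" and \<rho> :: "('a \<times> 'a) set" and Y :: "'b set" and \<sigma> :: "('b \<times> 'b) set"
    and C :: "'b set"
  assumes eqX: "equiv X \<rho>" and finX: "\<forall>K\<in>X//\<rho>. finite K"
    and large: "\<forall>N. \<exists>K\<in>X//\<rho>. N \<le> card K"
    and infX: "infinite X"
    and eqY: "equiv Y \<sigma>" and CY: "C \<in> Y//\<sigma>" and infC: "infinite C"
    and sing: "\<forall>y\<in>Y. y \<notin> C \<longrightarrow> \<sigma>``{y} = {y}"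
    and infYC: "infinite (Y - C)"
begin

lemma C_sub: "C \<subseteq> Y" using CY eqY by (meson in_quotient_imp_subset)

lemma C_rel: "a \<in> C \<Longrightarrow> b \<in> C \<Longrightarrow> (a,b) \<in> \<sigma>"
  by (rule in_quotient_imp_in_rel[OF eqY CY]) auto

lemma C_closed: "a \<in> C \<Longrightarrow> (a,b) \<in> \<sigma> \<Longrightarrow> b \<in> C"
  by (rule in_quotient_imp_closed[OF eqY CY])

lemma sig_cases: "(a,b) \<in> \<sigma> \<Longrightarrow> a = b \<or> (a \<in> C \<and> b \<in> C)"
proof -
  assume h: "(a,b) \<in> \<sigma>"
  have "a \<in> Y" using h equiv_type[OF eqY] by blast
  show ?thesis
  proof (cases "a \<in> C")
    case True then show ?thesis using C_closed h by blast
  next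
    case False
    then have "\<sigma>``{a} = {a}" using sing \<open>a \<in> Y\<close> by simp
    moreover have "b \<in> \<sigma>``{a}" using h by simp
    ultimately show ?thesis by simp
  qed
qed

lemma fresh_class:
  assumes "finite U" shows "\<exists>K\<in>X//\<rho>. N \<le> card K \<and> K \<inter> U = {}"
proof -
  let ?S = "{K\<in>X//\<rho>. N \<le> card K}"
  have "infinite ?S"
  proof
    assume "finite ?S"
    then have "finite (card ` ?S)" by simp
    then obtain M where M: "\<forall>k\<in>card ` ?S. k \<le> M" using finite_nat_set_iff_bounded_le by blast
    obtain K where "K \<in> X//\<rho>" "max N (Suc M) \<le> card K" using large by blast
    then show False using M by fastforce
  qed
  moreover have "finite ((\<lambda>u. \<rho>``{u}) ` U)" using assms by simp
  ultimately obtain K where K: "K \<in> ?S" "K \<notin> (\<lambda>u. \<rho>``{u}) ` U"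
    by (metis (no_types, lifting) Diff_infinite_finite ex_in_conv infinite_imp_nonempty DiffE)
  have "K \<inter> U = {}"
  proof (rule ccontr)
    assume "K \<inter> U \<noteq> {}"
    then obtain u where u: "u \<in> K" "u \<in> U" by blast
    obtain x where x: "K = \<rho>``{x}" "x \<in> X" using K(1) quotientE by blast
    have "(x,u) \<in> \<rho>" using u x by blast
    then have "K = \<rho>``{u}" using x eqX equiv_class_eq by fastforce
    then show False using K u by blast
  qed
  then show ?thesis using K by blast
qed

definition Inv :: "nat \<Rightarrow> nat set \<Rightarrow> (nat \<Rightarrow> 'b) \<Rightarrow> (nat \<Rightarrow> 'a) \<Rightarrow> bool" where
  "Inv m V e e' \<longleftrightarrow> finite V \<and> (\<forall>a\<in>V. e a \<in> Y \<and> e' a \<in> X)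
     \<and> (\<forall>a\<in>V. \<forall>b\<in>V. (e a = e b) = (e' a = e' b))
     \<and> (\<forall>a\<in>V. \<forall>b\<in>V. (e a, e b) \<in> \<sigma> \<longrightarrow> (e' a, e' b) \<in> \<rho>)
     \<and> (\<forall>a\<in>V. e a \<in> C \<longrightarrow> m + card (\<rho>``{e' a} \<inter> e'`V) \<le> card (\<rho>``{e' a}))"

lemma cls_fin: "x \<in> X \<Longrightarrow> finite (\<rho>``{x})" using finX by (simp add: quotientI)

lemma rho_sym: "(a,b) \<in> \<rho> \<Longrightarrow> (b,a) \<in> \<rho>"
proof - have "sym \<rho>" using eqX by (simp add: equiv_def) then show "(a,b) \<in> \<rho> \<Longrightarrow> (b,a) \<in> \<rho>" by (rule symD) qed
lemma rho_trans: "(a,b) \<in> \<rho> \<Longrightarrow> (b,c) \<in> \<rho> \<Longrightarrow> (a,c) \<in> \<rho>"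
proof - have "trans \<rho>" using eqX by (simp add: equiv_def) then show "(a,b) \<in> \<rho> \<Longrightarrow> (b,c) \<in> \<rho> \<Longrightarrow> (a,c) \<in> \<rho>" by (rule transD) qed
lemma rho_refl: "a \<in> X \<Longrightarrow> (a,a) \<in> \<rho>"
proof - have "refl_on X \<rho>" using eqX by (simp add: equiv_def) then show "a \<in> X \<Longrightarrow> (a,a) \<in> \<rho>" by (rule refl_onD) qed
lemma sig_sym: "(a,b) \<in> \<sigma> \<Longrightarrow> (b,a) \<in> \<sigma>"
proof - have "sym \<sigma>" using eqY by (simp add: equiv_def) then show "(a,b) \<in> \<sigma> \<Longrightarrow> (b,a) \<in> \<sigma>" by (rule symD) qed
lemma rho_cls: "(a,b) \<in> \<rho> \<Longrightarrow> \<rho>``{a} = \<rho>``{b}" by (rule equiv_class_eq[OF eqX])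

lemma step_general:
  assumes I: "Inv (Suc m) V e e'" and y: "y \<in> Y" and x: "x \<in> X"
    and eqs: "\<forall>b\<in>V-{v}. (y = e b) = (x = e' b)"
    and hom: "\<forall>b\<in>V-{v}. (y, e b) \<in> \<sigma> \<longrightarrow> (x, e' b) \<in> \<rho>"
    and room: "y \<in> C \<Longrightarrow> m + card (\<rho>``{x} \<inter> insert x (e'`(V-{v}))) \<le> card (\<rho>``{x})"
  shows "Inv m (insert v (V-{v})) (e(v:=y)) (e'(v:=x))"
proof -
  let ?W = "V - {v}"
  have fV: "finite V" using I Inv_def by blast
  have img: "(e'(v:=x)) ` insert v ?W = insert x (e'`?W)" by auto
  have r1: "card (\<rho>``{e' a} \<inter> insert x (e'`?W)) \<le> Suc (card (\<rho>``{e' a} \<inter> e'`V))" if "a \<in> V" for a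
  proof -
    have "\<rho>``{e' a} \<inter> insert x (e'`?W) \<subseteq> insert x (\<rho>``{e' a} \<inter> e'`V)" by auto
    then have "card (\<rho>``{e' a} \<inter> insert x (e'`?W)) \<le> card (insert x (\<rho>``{e' a} \<inter> e'`V))"
      using fV by (intro card_mono) auto
    also have "\<dots> \<le> Suc (card (\<rho>``{e' a} \<inter> e'`V))" using fV by (simp add: card_insert_le_m1)
    finally show ?thesis .
  qed
  show ?thesis unfolding Inv_def
  proof (intro conjI ballI impI)
    show "finite (insert v ?W)" using fV by simp
  next
    fix a assume "a \<in> insert v ?W" then show "(e(v := y)) a \<in> Y" "(e'(v := x)) a \<in> X"
      using I y x unfolding Inv_def by auto
  next
    fix a b assume "a \<in> insert v ?W" "b \<in> insert v ?W"
    then show "((e(v := y)) a = (e(v := y)) b) = ((e'(v := x)) a = (e'(v := x)) b)"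
      using I eqs unfolding Inv_def by (cases "a = v"; cases "b = v") (auto simp: eq_commute)
  next
    fix a b assume a: "a \<in> insert v ?W" and b: "b \<in> insert v ?W"
      and r: "((e(v := y)) a, (e(v := y)) b) \<in> \<sigma>"
    show "((e'(v := x)) a, (e'(v := x)) b) \<in> \<rho>"
    proof (cases "a = v")
      case True
      show ?thesis
      proof (cases "b = v")
        case True then show ?thesis using \<open>a = v\<close> x rho_refl by simp
      next
        case False then show ?thesis using \<open>a = v\<close> r b hom by auto
      qed
    next
      case False
      show ?thesis
      proof (cases "b = v")
        case True then show ?thesis using \<open>a \<noteq> v\<close> r a hom sig_sym rho_sym by auto
      next
        case False then show ?thesis using \<open>a \<noteq> v\<close> r a b I unfolding Inv_def by auto
      qed
    qed
  next
    fix a assume a: "a \<in> insert v ?W" and c: "(e(v := y)) a \<in> C"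
    show "m + card (\<rho> `` {(e'(v := x)) a} \<inter> (e'(v := x)) ` insert v ?W) \<le> card (\<rho> `` {(e'(v := x)) a})"
    proof (cases "a = v")
      case True then show ?thesis using c room img by simp
    next
      case False
      then have "a \<in> V" "e a \<in> C" using a c by auto
      then have "Suc m + card (\<rho>``{e' a} \<inter> e'`V) \<le> card (\<rho>``{e' a})" using I unfolding Inv_def by blast
      then show ?thesis using False r1[OF \<open>a \<in> V\<close>] img by simp
    qed
  qed
qed

lemma Inv_mono: "Inv m V e e' \<Longrightarrow> Inv m (V-{v}) e e'"
proof -
  assume I: "Inv m V e e'"
  have c: "card (\<rho>``{e' a} \<inter> e'`(V-{v})) \<le> card (\<rho>``{e' a} \<inter> e'`V)" for a
    using I unfolding Inv_def by (intro card_mono) auto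
  show ?thesis unfolding Inv_def
  proof (intro conjI ballI impI)
    show "finite (V - {v})" using I unfolding Inv_def by simp
  next
    fix a assume a: "a \<in> V - {v}" "e a \<in> C"
    then have "m + card (\<rho>``{e' a} \<inter> e'`V) \<le> card (\<rho>``{e' a})" using I unfolding Inv_def by blast
    then show "m + card (\<rho>``{e' a} \<inter> e'`(V-{v})) \<le> card (\<rho>``{e' a})" using c[of a] by linarith
  qed (use I in \<open>auto simp: Inv_def\<close>)
qed


lemma room_bound:
  assumes "finite V" shows "card (K \<inter> insert x (e'`(V-{v}))) \<le> Suc (card (K \<inter> e'`V))"
proof -
  have "K \<inter> insert x (e'`(V-{v})) \<subseteq> insert x (K \<inter> e'`V)" by auto
  then have "card (K \<inter> insert x (e'`(V-{v}))) \<le> card (insert x (K \<inter> e'`V))"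
    using assms by (intro card_mono) auto
  also have "\<dots> \<le> Suc (card (K \<inter> e'`V))" using assms by (simp add: card_insert_le_m1)
  finally show ?thesis .
qed

lemma cls_of: "K \<in> X//\<rho> \<Longrightarrow> x \<in> K \<Longrightarrow> K = \<rho>``{x}"
proof -
  assume K: "K \<in> X//\<rho>" and x: "x \<in> K"
  obtain z where z: "K = \<rho>``{z}" "z \<in> X" using K by (rule quotientE)
  then have "(z,x) \<in> \<rho>" using x by simp
  then show ?thesis using z rho_cls by simp
qed

lemma rho_X: "(a,b) \<in> \<rho> \<Longrightarrow> b \<in> X" using equiv_type[OF eqX] by blast

lemma step_ex:
  assumes I: "Inv (Suc m) V e e'" and y: "y \<in> Y"
  shows "\<exists>x\<in>X. Inv m (insert v (V-{v})) (e(v:=y)) (e'(v:=x))"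
proof -
  let ?W = "V - {v}"
  have fV: "finite V" and inV: "\<And>a. a \<in> V \<Longrightarrow> e a \<in> Y \<and> e' a \<in> X"
    and eqV: "\<And>a b. a \<in> V \<Longrightarrow> b \<in> V \<Longrightarrow> (e a = e b) = (e' a = e' b)"
    and homV: "\<And>a b. a \<in> V \<Longrightarrow> b \<in> V \<Longrightarrow> (e a, e b) \<in> \<sigma> \<Longrightarrow> (e' a, e' b) \<in> \<rho>"
    and roomV: "\<And>a. a \<in> V \<Longrightarrow> e a \<in> C \<Longrightarrow> Suc m + card (\<rho>``{e' a} \<inter> e'`V) \<le> card (\<rho>``{e' a})"
    using I unfolding Inv_def by blast+
  show ?thesis
  proof (cases "\<exists>a\<in>?W. y = e a")
    case True
    then obtain a where a: "a \<in> ?W" "y = e a" by blast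
    have "e' a \<in> X" using inV a by blast
    moreover have "Inv m (insert v ?W) (e(v:=y)) (e'(v:=e' a))"
    proof (rule step_general[OF I y \<open>e' a \<in> X\<close>])
      show "\<forall>b\<in>?W. (y = e b) = (e' a = e' b)" using a eqV by auto
      show "\<forall>b\<in>?W. (y, e b) \<in> \<sigma> \<longrightarrow> (e' a, e' b) \<in> \<rho>" using a homV by auto
      assume "y \<in> C"
      then have r: "Suc m + card (\<rho>``{e' a} \<inter> e'`V) \<le> card (\<rho>``{e' a})" using roomV a by auto
      have "insert (e' a) (e'`?W) \<subseteq> e'`V" using a by auto
      then have "card (\<rho>``{e' a} \<inter> insert (e' a) (e'`?W)) \<le> card (\<rho>``{e' a} \<inter> e'`V)"
        using fV by (intro card_mono) auto
      then show "m + card (\<rho>``{e' a} \<inter> insert (e' a) (e'`?W)) \<le> card (\<rho>``{e' a})" using r by linarith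
    qed
    ultimately show ?thesis by blast
  next
    case notin: False
    show ?thesis
    proof (cases "y \<in> C")
      case yC: True
      show ?thesis
      proof (cases "\<exists>a\<in>?W. e a \<in> C")
        case True
        then obtain a where a: "a \<in> ?W" "e a \<in> C" by blast
        let ?K = "\<rho>``{e' a}"
        have r: "Suc m + card (?K \<inter> e'`V) \<le> card ?K" using roomV a by auto
        have fK: "finite ?K" using cls_fin inV a by blast
        have "\<not> ?K \<subseteq> e'`V"
        proof
          assume "?K \<subseteq> e'`V" then have "?K \<inter> e'`V = ?K" by blast
          then show False using r by simp
        qed
        then obtain x where x: "x \<in> ?K" "x \<notin> e'`V" by blast
        have xa: "(e' a, x) \<in> \<rho>" using x by simp
        have xX: "x \<in> X" using rho_X xa .
        have Kx: "\<rho>``{x} = ?K" using rho_cls xa by simp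
        have "Inv m (insert v ?W) (e(v:=y)) (e'(v:=x))"
        proof (rule step_general[OF I y xX])
          show "\<forall>b\<in>?W. (y = e b) = (x = e' b)" using notin x by auto
          show "\<forall>b\<in>?W. (y, e b) \<in> \<sigma> \<longrightarrow> (x, e' b) \<in> \<rho>"
          proof (intro ballI impI)
            fix b assume b: "b \<in> ?W" and yb: "(y, e b) \<in> \<sigma>"
            have "e b \<in> C" using C_closed yC yb by blast
            then have "(e a, e b) \<in> \<sigma>" using C_rel a by blast
            then have "(e' a, e' b) \<in> \<rho>" using homV a b by auto
            then show "(x, e' b) \<in> \<rho>" using xa rho_sym rho_trans by blast
          qed
          show "m + card (\<rho>``{x} \<inter> insert x (e'`?W)) \<le> card (\<rho>``{x})"
            using room_bound[OF fV, of ?K x e' v] r Kx by simp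
        qed
        then show ?thesis using xX by blast
      next
        case False
        obtain K where K: "K \<in> X//\<rho>" "Suc m \<le> card K" "K \<inter> e'`?W = {}"
          using fresh_class[of "e'`?W" "Suc m"] fV by auto
        have "K \<noteq> {}" using K(2) by auto
        then obtain x where x: "x \<in> K" by blast
        have Kx: "K = \<rho>``{x}" using cls_of K(1) x by blast
        have xX: "x \<in> X" using Kx rho_X x by blast
        have "Inv m (insert v ?W) (e(v:=y)) (e'(v:=x))"
        proof (rule step_general[OF I y xX])
          show "\<forall>b\<in>?W. (y = e b) = (x = e' b)" using notin x K(3) by auto
          show "\<forall>b\<in>?W. (y, e b) \<in> \<sigma> \<longrightarrow> (x, e' b) \<in> \<rho>"
            using False C_closed yC by blast
          have "\<rho>``{x} \<inter> insert x (e'`?W) = {x}" using Kx K(3) x by auto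
          then show "m + card (\<rho>``{x} \<inter> insert x (e'`?W)) \<le> card (\<rho>``{x})"
            using K(2) Kx by simp
        qed
        then show ?thesis using xX by blast
      qed
    next
      case ynC: False
      have "infinite (X - e'`?W)" using infX fV by simp
      then obtain x where x: "x \<in> X" "x \<notin> e'`?W" using infinite_imp_nonempty by blast
      have "Inv m (insert v ?W) (e(v:=y)) (e'(v:=x))"
      proof (rule step_general[OF I y x(1)])
        show "\<forall>b\<in>?W. (y = e b) = (x = e' b)" using notin x by auto
        show "\<forall>b\<in>?W. (y, e b) \<in> \<sigma> \<longrightarrow> (x, e' b) \<in> \<rho>"
          using sig_cases notin ynC by blast
        show "y \<in> C \<Longrightarrow> m + card (\<rho>``{x} \<inter> insert x (e'`?W)) \<le> card (\<rho>``{x})" using ynC by simp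
      qed
      then show ?thesis using x by blast
    qed
  qed
qed

lemma step_all:
  assumes I: "Inv (Suc m) V e e'" and x: "x \<in> X"
  shows "\<exists>y\<in>Y. Inv m (insert v (V-{v})) (e(v:=y)) (e'(v:=x))"
proof -
  let ?W = "V - {v}"
  have fV: "finite V" and inV: "\<And>a. a \<in> V \<Longrightarrow> e a \<in> Y \<and> e' a \<in> X"
    and eqV: "\<And>a b. a \<in> V \<Longrightarrow> b \<in> V \<Longrightarrow> (e a = e b) = (e' a = e' b)"
    and homV: "\<And>a b. a \<in> V \<Longrightarrow> b \<in> V \<Longrightarrow> (e a, e b) \<in> \<sigma> \<Longrightarrow> (e' a, e' b) \<in> \<rho>"
    and roomV: "\<And>a. a \<in> V \<Longrightarrow> e a \<in> C \<Longrightarrow> Suc m + card (\<rho>``{e' a} \<inter> e'`V) \<le> card (\<rho>``{e' a})"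
    using I unfolding Inv_def by blast+
  show ?thesis
  proof (cases "\<exists>a\<in>?W. x = e' a")
    case True
    then obtain a where a: "a \<in> ?W" "x = e' a" by blast
    have "e a \<in> Y" using inV a by blast
    moreover have "Inv m (insert v ?W) (e(v:=e a)) (e'(v:=x))"
    proof (rule step_general[OF I \<open>e a \<in> Y\<close> x])
      show "\<forall>b\<in>?W. (e a = e b) = (x = e' b)" using a eqV by auto
      show "\<forall>b\<in>?W. (e a, e b) \<in> \<sigma> \<longrightarrow> (x, e' b) \<in> \<rho>" using a homV by auto
      assume "e a \<in> C"
      then have r: "Suc m + card (\<rho>``{e' a} \<inter> e'`V) \<le> card (\<rho>``{e' a})" using roomV a by auto
      have "insert x (e'`?W) \<subseteq> e'`V" using a by auto
      then have "card (\<rho>``{e' a} \<inter> insert x (e'`?W)) \<le> card (\<rho>``{e' a} \<inter> e'`V)"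
        using fV by (intro card_mono) auto
      then show "m + card (\<rho>``{x} \<inter> insert x (e'`?W)) \<le> card (\<rho>``{x})" using r a by simp
    qed
    ultimately show ?thesis by blast
  next
    case notin: False
    show ?thesis
    proof (cases "\<exists>a\<in>?W. e a \<in> C \<and> (e' a, x) \<in> \<rho>")
      case True
      then obtain a where a: "a \<in> ?W" "e a \<in> C" "(e' a, x) \<in> \<rho>" by blast
      let ?K = "\<rho>``{e' a}"
      have r: "Suc m + card (?K \<inter> e'`V) \<le> card ?K" using roomV a by auto
      have Kx: "\<rho>``{x} = ?K" using rho_cls a(3) by simp
      have "infinite (C - e`?W)" using infC fV by simp
      then obtain y where y: "y \<in> C" "y \<notin> e`?W" using infinite_imp_nonempty by blast
      have yY: "y \<in> Y" using C_sub y by blast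
      have "Inv m (insert v ?W) (e(v:=y)) (e'(v:=x))"
      proof (rule step_general[OF I yY x])
        show "\<forall>b\<in>?W. (y = e b) = (x = e' b)" using notin y by auto
        show "\<forall>b\<in>?W. (y, e b) \<in> \<sigma> \<longrightarrow> (x, e' b) \<in> \<rho>"
        proof (intro ballI impI)
          fix b assume b: "b \<in> ?W" and yb: "(y, e b) \<in> \<sigma>"
          have "e b \<in> C" using C_closed y yb by blast
          then have "(e a, e b) \<in> \<sigma>" using C_rel a by blast
          then have "(e' a, e' b) \<in> \<rho>" using homV a b by auto
          then show "(x, e' b) \<in> \<rho>" using a(3) rho_sym rho_trans by blast
        qed
        show "m + card (\<rho>``{x} \<inter> insert x (e'`?W)) \<le> card (\<rho>``{x})"
          using room_bound[OF fV, of ?K x e' v] r Kx by simp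
      qed
      then show ?thesis using yY by blast
    next
      case False
      have "infinite ((Y - C) - e`?W)" using infYC fV by simp
      then obtain y where y: "y \<in> Y" "y \<notin> C" "y \<notin> e`?W" using infinite_imp_nonempty by blast
      have "Inv m (insert v ?W) (e(v:=y)) (e'(v:=x))"
      proof (rule step_general[OF I y(1) x])
        show "\<forall>b\<in>?W. (y = e b) = (x = e' b)" using notin y by auto
        show "\<forall>b\<in>?W. (y, e b) \<in> \<sigma> \<longrightarrow> (x, e' b) \<in> \<rho>"
          using sig_cases y by blast
        show "y \<in> C \<Longrightarrow> m + card (\<rho>``{x} \<inter> insert x (e'`?W)) \<le> card (\<rho>``{x})" using y by simp
      qed
      then show ?thesis using y by blast
    qed
  qed
qed

lemma game_lemma:
  "positive \<phi> \<Longrightarrow> qd \<phi> \<le> m \<Longrightarrow> Inv m V e e' \<Longrightarrow> fv \<phi> \<subseteq> V \<Longrightarrow> sat Y \<sigma> \<phi> e \<Longrightarrow> sat X \<rho> \<phi> e'"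
proof (induction \<phi> arbitrary: m V e e')
  case (FEq a b) then show ?case unfolding Inv_def by auto
next
  case (FRel a b) then show ?case unfolding Inv_def by auto
next
  case (FNeg p)
  then obtain a b where p: "p = FEq a b" by auto
  then show ?case using FNeg.prems unfolding Inv_def by auto
next
  case (FConj p q) then show ?case by auto
next
  case (FDisj p q) then show ?case by auto
next
  case (FEx v p)
  obtain m' where m: "m = Suc m'" "qd p \<le> m'" using FEx.prems(2) by (cases m) auto
  obtain y where y: "y \<in> Y" "sat Y \<sigma> p (e(v:=y))" using FEx.prems(5) by auto
  obtain x where x: "x \<in> X" "Inv m' (insert v (V-{v})) (e(v:=y)) (e'(v:=x))"
    using step_ex[of m' V e e' y v] FEx.prems(3) m y by auto
  have fvs: "fv p \<subseteq> insert v (V-{v})" using FEx.prems(4) by auto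
  have pp: "positive p" using FEx.prems(1) by simp
  have "sat X \<rho> p (e'(v:=x))" by (rule FEx.IH[OF pp m(2) x(2) fvs y(2)])
  then show ?case using x by auto
next
  case (FAll v p)
  obtain m' where m: "m = Suc m'" "qd p \<le> m'" using FAll.prems(2) by (cases m) auto
  have "fv p \<subseteq> insert v (V-{v})" using FAll.prems(4) by auto
  have "sat X \<rho> p (e'(v:=x))" if x: "x \<in> X" for x
  proof -
    obtain y where y: "y \<in> Y" "Inv m' (insert v (V-{v})) (e(v:=y)) (e'(v:=x))"
      using step_all[of m' V e e' x v] FAll.prems(3) m x by auto
    have "sat Y \<sigma> p (e(v:=y))" using FAll.prems(5) y by auto
    moreover have pp: "positive p" using FAll.prems(1) by simp
    ultimately show ?thesis using FAll.IH[OF pp m(2) y(2) \<open>fv p \<subseteq> _\<close>] by blast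
  qed
  then show ?case by auto
qed

lemma game_holds:
  assumes "positive \<phi>" "fv \<phi> = {}" "holds Y \<sigma> \<phi>" "Y \<noteq> {}"
  shows "holds X \<rho> \<phi>"
  unfolding holds_def
proof (intro allI impI)
  fix e' :: "nat \<Rightarrow> 'a" assume "\<forall>n. e' n \<in> X"
  obtain y where y: "y \<in> Y" using assms(4) by blast
  have "sat Y \<sigma> \<phi> (\<lambda>_. y)" using assms(3) y unfolding holds_def by auto
  moreover have "Inv (qd \<phi>) {} (\<lambda>_. y) e'" unfolding Inv_def by simp
  ultimately show "sat X \<rho> \<phi> e'" using game_lemma assms by blast
qed


lemma Phi_X: "\<not> pholds X \<rho> Phi"
proof
  assume h: "pholds X \<rho> Phi"
  obtain x0 where x0: "x0 \<in> X" using infX infinite_imp_nonempty by blast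
  have "psat X \<rho> Phi (\<lambda>_. x0)" using h x0 unfolding pholds_def by simp
  then obtain x where x: "x \<in> X" and all: "\<forall>n::nat. \<exists>f. (\<forall>i\<in>{1..n}. f i \<in> X) \<and>
     (\<forall>i\<in>{1..n}. (x, f i) \<in> \<rho>) \<and> (\<forall>i\<in>{1..n}. \<forall>j\<in>{1..n}. i \<noteq> j \<longrightarrow> f i \<noteq> f j)"
    unfolding Phi_sat by blast
  let ?n = "Suc (card (\<rho>``{x}))"
  obtain f where f: "\<forall>i\<in>{1..?n}. (x, f i) \<in> \<rho>" "\<forall>i\<in>{1..?n}. \<forall>j\<in>{1..?n}. i \<noteq> j \<longrightarrow> f i \<noteq> f j"
    using all by blast
  have inj: "inj_on f {1..?n}" using f(2) unfolding inj_on_def by blast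
  have sub: "f ` {1..?n} \<subseteq> \<rho>``{x}" using f(1) by auto
  have "card (f ` {1..?n}) = ?n" using card_image[OF inj] by simp
  moreover have "card (f ` {1..?n}) \<le> card (\<rho>``{x})" using card_mono[OF cls_fin[OF x] sub] .
  ultimately show False by simp
qed

lemma Phi_Y: "pholds Y \<sigma> Phi"
  unfolding pholds_def
proof (intro allI impI)
  fix e :: "nat \<Rightarrow> 'b"
  obtain x where x: "x \<in> C" using infC infinite_imp_nonempty by blast
  have "\<exists>f. (\<forall>i\<in>{1..n}. f i \<in> Y) \<and> (\<forall>i\<in>{1..n}. (x, f i) \<in> \<sigma>) \<and>
     (\<forall>i\<in>{1..n}. \<forall>j\<in>{1..n}. i \<noteq> j \<longrightarrow> f i \<noteq> f j)" for n :: nat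
  proof -
    obtain S where S: "finite S" "card S = n" "S \<subseteq> C" using infinite_arbitrarily_large[OF infC] by blast
    obtain h where h: "bij_betw h {1..card S} S" using ex_bij_betw_nat_finite_1[OF S(1)] by blast
    have hS: "\<forall>i\<in>{1..n}. h i \<in> S" using h S(2) by (auto simp: bij_betw_def)
    have "inj_on h {1..n}" using h S(2) by (simp add: bij_betw_def)
    then have "\<forall>i\<in>{1..n}. \<forall>j\<in>{1..n}. i \<noteq> j \<longrightarrow> h i \<noteq> h j" unfolding inj_on_def by blast
    moreover have "\<forall>i\<in>{1..n}. h i \<in> Y" using hS S(3) C_sub by blast
    moreover have "\<forall>i\<in>{1..n}. (x, h i) \<in> \<sigma>" using hS S(3) C_rel x by blast
    ultimately show ?thesis by blast
  qed
  moreover have "x \<in> Y" using x C_sub by blast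
  ultimately show "psat Y \<sigma> Phi e" unfolding Phi_sat by blast
qed

lemma Psi_Y: "holds Y \<sigma> Psi"
  unfolding holds_def
proof (intro allI impI)
  fix e :: "nat \<Rightarrow> 'b"
  obtain x where x: "x \<in> C" using infC infinite_imp_nonempty by blast
  have "\<forall>z\<in>Y. \<forall>w\<in>Y. (z,w) \<in> \<sigma> \<longrightarrow> z = w \<or> (x,z) \<in> \<sigma>"
    using sig_cases C_rel x by blast
  moreover have "x \<in> Y" using x C_sub by blast
  ultimately show "sat Y \<sigma> Psi e" unfolding Psi_sat by blast
qed

lemma Psi_X: "\<not> holds X \<rho> Psi"
proof
  assume h: "holds X \<rho> Psi"
  obtain x0 where x0: "x0 \<in> X" using infX infinite_imp_nonempty by blast
  have "sat X \<rho> Psi (\<lambda>_. x0)" using h x0 unfolding holds_def by simp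
  then obtain x where x: "x \<in> X" and P: "\<forall>z\<in>X. \<forall>w\<in>X. (z,w) \<in> \<rho> \<longrightarrow> z = w \<or> (x,z) \<in> \<rho>"
    unfolding Psi_sat by blast
  obtain K1 where K1: "K1 \<in> X//\<rho>" "2 \<le> card K1" using large by blast
  obtain K2 where K2: "K2 \<in> X//\<rho>" "Suc (card K1) \<le> card K2" using large by blast
  have "K1 \<noteq> K2" using K1 K2 by auto
  then obtain K where K: "K \<in> X//\<rho>" "2 \<le> card K" "K \<noteq> \<rho>``{x}"
    using K1 K2 by (metis Suc_leD le_trans)
  obtain z where z: "z \<in> K"
    using K(2) by (metis card.empty ex_in_conv not_numeral_le_zero)
  have "\<not> K \<subseteq> {z}"
  proof
    assume "K \<subseteq> {z}" then have "card K \<le> 1" using card_mono[of "{z}" K] by simp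
    then show False using K(2) by simp
  qed
  then obtain w where w: "w \<in> K" "w \<noteq> z" by blast
  have zw: "(z,w) \<in> \<rho>" by (rule in_quotient_imp_in_rel[OF eqX K(1)]) (use z w in auto)
  have "z \<in> X" "w \<in> X" using K(1) z w in_quotient_imp_subset[OF eqX] by blast+
  then have "(x,z) \<in> \<rho>" using P zw w by blast
  then have "\<rho>``{x} = \<rho>``{z}" by (rule rho_cls)
  also have "\<dots> = K" using cls_of[OF K(1) z] by simp
  finally show False using K(3) by simp
qed

end

lemma count_bij:
  assumes "countable A" "infinite A" "countable B" "infinite B"
  shows "\<exists>f. bij_betw f A B"
proof -
  obtain e1 :: "_ \<Rightarrow> nat" where e1: "bij_betw e1 A UNIV" using countableE_infinite[OF assms(1,2)] by blast
  obtain e2 :: "_ \<Rightarrow> nat" where e2: "bij_betw e2 B UNIV" using countableE_infinite[OF assms(3,4)] by blast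
  show ?thesis using bij_betw_trans[OF e1 bij_betw_inv_into[OF e2]] by blast
qed

theorem mainTheorem18:
  fixes X :: "'a set" and \<rho> :: "('a \<times> 'a) set"
    and Y :: "'b set" and \<sigma> :: "('b \<times> 'b) set"
  assumes "countable X" and "equiv X \<rho>"
    and "infinite {C \<in> X // \<rho>. card C = 1}"
    and "\<forall>i::nat. i \<ge> 2 \<longrightarrow> (\<exists>!C. C \<in> X // \<rho> \<and> finite C \<and> card C = i)"
    and "\<forall>C \<in> X // \<rho>. finite C"
  assumes "countable Y" and "equiv Y \<sigma>"
    and "infinite {C \<in> Y // \<sigma>. card C = 1}"
    and "\<exists>C \<in> Y // \<sigma>. infinite C \<and> (\<forall>D \<in> Y // \<sigma>. D \<noteq> C \<longrightarrow> card D = 1)"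
  shows "pos_equiv X \<rho> Y \<sigma> \<and> \<not> inf_pos_equiv X \<rho> Y \<sigma> \<and> \<not> elem_equiv X \<rho> Y \<sigma>"
proof -
  note eqX = assms(2) and eqY = assms(7)
  obtain C where CY: "C \<in> Y//\<sigma>" and infC: "infinite C" and others: "\<forall>D \<in> Y // \<sigma>. D \<noteq> C \<longrightarrow> card D = 1"
    using assms(9) by blast
  have large: "\<forall>N. \<exists>K\<in>X//\<rho>. N \<le> card K"
  proof
    fix N :: nat
    have "2 \<le> max N 2" by simp
    then have "\<exists>!K. K \<in> X//\<rho> \<and> finite K \<and> card K = max N 2" using assms(4) by blast
    then have "\<exists>K. K \<in> X//\<rho> \<and> finite K \<and> card K = max N 2" by (rule ex1_implies_ex)
    then obtain K where K: "K \<in> X//\<rho>" "card K = max N 2" by blast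
    have "N \<le> card K" using K(2) by simp
    then show "\<exists>K\<in>X//\<rho>. N \<le> card K" using K(1) by blast
  qed
  have infX: "infinite X"
  proof
    assume "finite X"
    then have "finite (Pow X)" by simp
    moreover have "{C \<in> X // \<rho>. card C = 1} \<subseteq> Pow X" using in_quotient_imp_subset[OF eqX] by blast
    ultimately show False using assms(3) finite_subset by blast
  qed
  have sing: "\<forall>y\<in>Y. y \<notin> C \<longrightarrow> \<sigma>``{y} = {y}"
  proof (intro ballI impI)
    fix y assume y: "y \<in> Y" "y \<notin> C"
    have D: "\<sigma>``{y} \<in> Y//\<sigma>" using y(1) by (rule quotientI)
    have yD: "y \<in> \<sigma>``{y}" using equiv_class_self[OF eqY y(1)] .
    then have ne: "\<sigma>``{y} \<noteq> C" using y(2) by auto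
    have "card (\<sigma>``{y}) = 1" using others D ne by simp
    then obtain z where "\<sigma>``{y} = {z}" by (rule card_1_singletonE)
    then show "\<sigma>``{y} = {y}" using yD by simp
  qed
  have infYC: "infinite (Y - C)"
  proof
    assume "finite (Y - C)"
    then have "finite (Pow (Y - C))" by simp
    moreover have "{D \<in> Y // \<sigma>. card D = 1} \<subseteq> Pow (Y - C)"
    proof
      fix D assume D: "D \<in> {D \<in> Y // \<sigma>. card D = 1}"
      then have "D \<noteq> C" using infC by auto
      then have "D \<inter> C = {}" using quotient_disj[OF eqY] D CY by blast
      moreover have "D \<subseteq> Y" using D in_quotient_imp_subset[OF eqY] by blast
      ultimately show "D \<in> Pow (Y - C)" by blast
    qed
    ultimately show False using assms(8) finite_subset by blast
  qed
  interpret G: game X \<rho> Y \<sigma> C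
    using eqX assms(5) large infX eqY CY infC sing infYC by unfold_locales
  define SX where "SX = {x\<in>X. \<rho>``{x} = {x}}"
  define NX where "NX = X - SX"
  have infSX: "infinite SX"
  proof
    assume "finite SX"
    then have "finite ((\<lambda>x. {x}) ` SX)" by simp
    moreover have "{C \<in> X // \<rho>. card C = 1} \<subseteq> (\<lambda>x. {x}) ` SX"
    proof
      fix K assume K: "K \<in> {C \<in> X // \<rho>. card C = 1}"
      then have "card K = 1" by simp
      then obtain x where x: "K = {x}" by (rule card_1_singletonE)
      then have "K = \<rho>``{x}" using G.cls_of K by auto
      moreover have "x \<in> X" using K x in_quotient_imp_subset[OF eqX] by blast
      ultimately show "K \<in> (\<lambda>x. {x}) ` SX" using x unfolding SX_def by auto
    qed
    ultimately show False using assms(3) finite_subset by blast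
  qed
  have infNX: "infinite NX"
  proof
    assume fin: "finite NX"
    obtain K where K: "K \<in> X//\<rho>" "max 2 (Suc (card NX)) \<le> card K" using large by blast
    have "K \<subseteq> NX"
    proof
      fix x assume x: "x \<in> K"
      have "K = \<rho>``{x}" using G.cls_of K(1) x by blast
      moreover have "K \<noteq> {x}" using K(2) by auto
      moreover have "x \<in> X" using K(1) x in_quotient_imp_subset[OF eqX] by blast
      ultimately show "x \<in> NX" unfolding NX_def SX_def by auto
    qed
    then have "card K \<le> card NX" using fin card_mono by blast
    then show False using K(2) by simp
  qed
  have cSX: "countable SX" by (rule countable_subset[OF _ assms(1)]) (auto simp: SX_def)
  have cNX: "countable NX" by (rule countable_subset[OF _ assms(1)]) (auto simp: NX_def)
  have cYC: "countable (Y - C)" by (rule countable_subset[OF _ assms(6)]) auto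
  have cC: "countable C" by (rule countable_subset[OF G.C_sub assms(6)])
  obtain f1 where f1: "bij_betw f1 SX (Y - C)" using count_bij[OF cSX infSX cYC infYC] by blast
  obtain f2 where f2: "bij_betw f2 NX C" using count_bij[OF cNX infNX cC infC] by blast
  define h where "h = (\<lambda>x. if x \<in> SX then f1 x else f2 x)"
  have XU: "X = SX \<union> NX" unfolding NX_def SX_def by blast
  have YU: "Y = (Y - C) \<union> C" using G.C_sub by blast
  have dj1: "SX \<inter> NX = {}" unfolding NX_def by blast
  have dj2: "(Y - C) \<inter> C = {}" by blast
  have bij: "bij_betw h X Y"
    unfolding h_def using bij_betw_disjoint_Un[OF f1 f2 dj1 dj2] XU YU by simp
  have hom: "\<forall>a b. (a,b) \<in> \<rho> \<longrightarrow> (h a, h b) \<in> \<sigma>"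
  proof (intro allI impI)
    fix a b assume ab: "(a,b) \<in> \<rho>"
    have aX: "a \<in> X" and bX: "b \<in> X" using ab equiv_type[OF eqX] by blast+
    show "(h a, h b) \<in> \<sigma>"
    proof (cases "a \<in> SX")
      case True
      then have "b = a" using ab unfolding SX_def by auto
      moreover have "h a \<in> Y" using bij aX by (auto simp: bij_betw_def)
      ultimately show ?thesis using equiv_class_self[OF eqY] by auto
    next
      case False
      have "b \<notin> SX"
      proof
        assume "b \<in> SX"
        then have "a = b" using G.rho_sym[OF ab] unfolding SX_def by auto
        then show False using False \<open>b \<in> SX\<close> by simp
      qed
      then have "h a \<in> C" "h b \<in> C" using False aX bX f2 unfolding h_def NX_def
        by (auto simp: bij_betw_def)
      then show ?thesis using G.C_rel by blast
    qed
  qed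
  have Yne: "Y \<noteq> {}" using G.C_sub infC by auto
  have P1: "pos_equiv X \<rho> Y \<sigma>"
    unfolding pos_equiv_def
    using hom_holds[OF _ bij hom] G.game_holds[OF _ _ _ Yne] by blast
  have P2: "\<not> inf_pos_equiv X \<rho> Y \<sigma>"
    unfolding inf_pos_equiv_def using pfv_Phi G.Phi_X G.Phi_Y by blast
  have P3: "\<not> elem_equiv X \<rho> Y \<sigma>"
    unfolding elem_equiv_def using fv_Psi G.Psi_X G.Psi_Y by blast
  show ?thesis using P1 P2 P3 by blast
qed

end
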